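(* Let $n \ge 2$ be an integer, $M$ a real $n\times n$ matrix, $\alpha := \frac1n s(M)$, $\beta := \frac1n q(M)$, and $\kappa := \frac{n\beta - \alpha^2}{n-1}$. Then: if $\alpha^2 < \beta$: $|\det M| \le \beta^{n/2}$; if $\alpha^2 = \beta$: $|\det M| \le |\alpha|\kappa^{\frac{n-1}{2}} = \beta^{n/2}$; if $\alpha^2 > \beta$: $|\det M| \le |\alpha|\kappa^{\frac{n-1}{2}} < \beta^{n/2}$.
   Context: For a real matrix $M$, $s(M)$ denotes the sum of all entries of $M$ and $q(M)$ the sum of the squares of all entries of $M$. *)

theory Defs
  imports "HOL-Analysis.Analysis"
begin

definition msum :: "real^'n^'m \<Rightarrow> real" where
  "msum M = (\<Sum>i\<in>UNIV. \<Sum>j\<in>UNIV. M $ i $ j)"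

definition msq :: "real^'n^'m \<Rightarrow> real" where
  "msq M = (\<Sum>i\<in>UNIV. \<Sum>j\<in>UNIV. (M $ i $ j)^2)"

end

theory Submission imports Defs begin

lemma amgm:
  fixes x :: "'a \<Rightarrow> real"
  assumes "finite S" "S \<noteq> {}" "\<And>i. i \<in> S \<Longrightarrow> x i \<ge> 0"
  shows "(\<Prod>i\<in>S. x i) \<le> ((\<Sum>i\<in>S. x i) / card S) ^ card S"
proof -
  define \<mu> where "\<mu> = (\<Sum>i\<in>S. x i) / card S"
  have cpos: "card S > 0" using assms by (simp add: card_gt_0_iff)
  have sum_nn: "(\<Sum>i\<in>S. x i) \<ge> 0" using assms by (simp add: sum_nonneg)
  show ?thesis
  proof (cases "\<mu> = 0")
    case True
    then have "(\<Sum>i\<in>S. x i) = 0" using cpos by (simp add: \<mu>_def)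
    then have "\<forall>i\<in>S. x i = 0" using sum_nonneg_eq_0_iff[OF assms(1)] assms(3) by blast
    moreover obtain i0 where "i0 \<in> S" using assms(2) by blast
    ultimately have "(\<Prod>i\<in>S. x i) = 0" using prod_zero_iff[OF assms(1)] by blast
    then show ?thesis using True cpos unfolding \<mu>_def[symmetric] by simp
  next
    case False
    then have mpos: "\<mu> > 0" using sum_nn cpos by (simp add: \<mu>_def)
    have "(\<Prod>i\<in>S. x i / \<mu>) \<le> (\<Prod>i\<in>S. exp (x i / \<mu> - 1))"
      apply (rule prod_mono)
      using assms(3) mpos exp_ge_add_one_self[of "x _ / \<mu> - 1"] by auto
    also have "\<dots> = exp (\<Sum>i\<in>S. (x i / \<mu> - 1))" using exp_sum[OF assms(1), of "\<lambda>i. x i / \<mu> - 1"] by simp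
    also have "(\<Sum>i\<in>S. (x i / \<mu> - 1)) = (\<Sum>i\<in>S. x i) / \<mu> - card S"
      by (simp add: sum_subtractf sum_divide_distrib)
    also have "\<dots> = 0"
    proof -
      have sne: "(\<Sum>i\<in>S. x i) \<noteq> 0" using mpos by (auto simp: \<mu>_def)
      then show ?thesis using cpos by (simp add: \<mu>_def)
    qed
    finally have "(\<Prod>i\<in>S. x i / \<mu>) \<le> 1" by simp
    moreover have "(\<Prod>i\<in>S. x i / \<mu>) = (\<Prod>i\<in>S. x i) / \<mu> ^ card S"
      by (simp add: prod_dividef)
    ultimately show ?thesis using mpos by (simp add: \<mu>_def[symmetric] divide_le_eq)
  qed
qed

lemma orth_step:
  fixes A :: "real^'n^'n"
  assumes "finite S"
  shows "\<exists>B. det B = det A \<and> (\<forall>i. norm (B$i) \<le> norm (A$i))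
     \<and> (\<forall>i\<in>S. \<forall>j\<in>S. i \<noteq> j \<longrightarrow> B$i \<bullet> B$j = 0) \<and> (\<forall>i. i \<notin> S \<longrightarrow> B$i = A$i)"
  using assms
proof (induction S rule: finite_induct)
  case empty
  then show ?case by auto
next
  case (insert k S)
  then obtain B where Bd: "det B = det A" and Bn: "\<forall>i. norm (B$i) \<le> norm (A$i)"
    and Bo: "\<forall>i\<in>S. \<forall>j\<in>S. i \<noteq> j \<longrightarrow> B$i \<bullet> B$j = 0" and Bu: "\<forall>i. i \<notin> S \<longrightarrow> B$i = A$i"
    by blast
  obtain y z where y: "y \<in> span {B$i | i. i \<in> S}"
     and z: "\<And>w. w \<in> span {B$i | i. i \<in> S} \<Longrightarrow> orthogonal z w" and yz: "B$k = y + z"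
    using orthogonal_subspace_decomp_exists by blast
  define B' where "B' = (\<chi> i. if i = k then row k B + (- y) else row i B)"
  have rowB: "row i B = B$i" for i by (simp add: row_def vec_eq_iff)
  have B'i: "B'$i = (if i = k then z else B$i)" for i
    by (simp add: B'_def rowB yz)
  have sub: "{B$i | i. i \<in> S} \<subseteq> {row j B | j. j \<noteq> k}"
    using insert(2) rowB by fastforce
  have "- y \<in> span {row j B | j. j \<noteq> k}"
    using span_mono[OF sub] y span_neg by blast
  then have dB': "det B' = det B"
    unfolding B'_def using det_row_span[of "- y" B k] by (simp add: span_vec_eq)
  have "(norm (B$k))\<^sup>2 = (norm y)\<^sup>2 + (norm z)\<^sup>2"
    using yz norm_add_Pythagorean[of y z] z[OF y] by (simp add: orthogonal_commute)
  then have "norm z \<le> norm (B$k)"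
    by (smt (verit, best) norm_ge_zero power2_le_imp_le zero_le_power2)
  then have nk: "norm z \<le> norm (A$k)" using Bu insert(2) by simp
  have oz: "z \<bullet> B$j = 0" if "j \<in> S" for j
    using z[of "B$j"] that span_base[of "B$j" "{B$i | i. i \<in> S}"] by (auto simp: orthogonal_def)
  show ?case
  proof (intro exI[of _ B'] conjI allI ballI impI)
    show "det B' = det A" using dB' Bd by simp
  next
    fix i show "norm (B'$i) \<le> norm (A$i)" using nk Bn by (simp add: B'i)
  next
    fix i j assume "i \<in> insert k S" "j \<in> insert k S" "i \<noteq> j"
    then show "B'$i \<bullet> B'$j = 0"
      using Bo oz insert(2) by (auto simp: B'i inner_commute)
  next
    fix i assume "i \<notin> insert k S"
    then show "B'$i = A$i" using Bu by (simp add: B'i)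
  qed
qed

lemma hadamard:
  fixes A :: "real^'n^'n"
  shows "\<bar>det A\<bar> \<le> (\<Prod>i\<in>UNIV. norm (A$i))"
proof -
  obtain B where Bd: "det B = det A" and Bn: "\<forall>i. norm (B$i) \<le> norm (A$i)"
    and Bo: "\<forall>i j. i \<noteq> j \<longrightarrow> B$i \<bullet> B$j = 0"
    using orth_step[of "UNIV :: 'n set" A] by auto
  have e: "(B ** transpose B)$i$j = B$i \<bullet> B$j" for i j
    by (simp add: matrix_matrix_mult_def transpose_def inner_vec_def)
  have "det (B ** transpose B) = (\<Prod>i\<in>UNIV. B$i \<bullet> B$i)"
    by (rule det_diagonal[THEN trans]) (auto simp: e Bo)
  then have "(det B)\<^sup>2 = (\<Prod>i\<in>UNIV. norm (B$i))\<^sup>2"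
    by (simp add: det_mul power2_eq_square dot_square_norm prod.distrib[symmetric])
  then have "\<bar>det B\<bar> = (\<Prod>i\<in>UNIV. norm (B$i))"
    by (metis abs_of_nonneg norm_ge_zero power2_abs power2_eq_iff_nonneg prod_nonneg abs_ge_zero)
  also have "\<dots> \<le> (\<Prod>i\<in>UNIV. norm (A$i))"
    by (rule prod_mono) (use Bn in auto)
  finally show ?thesis using Bd by simp
qed


lemma bern_strict:
  fixes v :: real
  assumes "v > -1" "v \<noteq> 0"
  shows "1 + real (n+2) * v < (1+v)^(n+2)"
proof (induction n)
  case 0
  have e: "(1+v)^(0+2) = 1 + 2 * v + v^2" by (simp add: power2_eq_square algebra_simps)
  have p: "v^2 > 0" using assms by simp
  have r: "real (0+2) * v = 2 * v" by simp
  show ?case using e p r by linarith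
next
  case (Suc n)
  have h1: "(1+v) * (1 + real (n+2) * v) < (1+v)^(Suc n + 2)"
  proof -
    have "(1+v)^(Suc n + 2) = (1+v)*(1+v)^(n+2)" by simp
    moreover have "1 + v > 0" using assms by simp
    ultimately show ?thesis using mult_strict_left_mono[OF Suc.IH] by simp
  qed
  have h2: "(1+v) * (1 + real (n+2) * v) = 1 + real (Suc n + 2) * v + real (n+2) * v^2"
    by (simp add: algebra_simps power2_eq_square)
  have h3: "real (n+2) * v^2 \<ge> 0" by simp
  show ?case using h1 h2 h3 by linarith
qed

lemma L2:
  fixes a k :: real and m :: nat
  assumes "a \<ge> 0" "k \<ge> 0" "a \<noteq> k" "m \<ge> 1"
  shows "a * k^m < ((a + m * k) / (m+1))^(m+1)"
proof (cases "k = 0")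
  case True
  then show ?thesis using assms by (simp add: zero_power)
next
  case False
  then have kp: "k > 0" using assms by simp
  define v where "v = (a - k) / ((m+1) * k)"
  have "(a - k) / ((m+1) * k) > -1"
  proof -
    have d: "(m+1) * k > 0" using kp by simp
    have "k * real m > 0" using kp assms by simp
    moreover have "- ((m+1) * k) = - k - k * real m" by (simp add: algebra_simps)
    ultimately have "- ((m+1) * k) < a - k" using assms by linarith
    then show ?thesis using d by (simp add: less_divide_eq)
  qed
  then have v1: "v > -1" by (simp add: v_def)
  have v0: "v \<noteq> 0" using kp assms by (simp add: v_def)
  obtain j where j: "m + 1 = j + 2" using assms by (metis add_2_eq_Suc' le_Suc_ex add.commute Suc_eq_plus1 plus_1_eq_Suc)
  have dpos: "k + k * real m > 0" using kp by (simp add: add_pos_nonneg)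
  then have mean: "(a + m * k) / (m+1) = k * (1+v)" using kp by (simp add: v_def field_simps)
  have "1 + real (m+1) * v < (1+v)^(m+1)" using bern_strict[OF v1 v0, of j] j by simp
  moreover have "1 + real (m+1) * v = a / k" using kp dpos by (simp add: v_def field_simps)
  ultimately have "a / k < (1+v)^(m+1)" by simp
  then have "k^(m+1) * (a/k) < k^(m+1) * (1+v)^(m+1)" using kp by (intro mult_strict_left_mono) auto
  moreover have "k^(m+1) * (a/k) = a * k^m" using kp by (simp add: field_simps)
  moreover have "((a + m * k) / (m+1))^(m+1) = k^(m+1) * (1+v)^(m+1)"
    by (simp only: mean power_mult_distrib)
  ultimately show ?thesis by simp
qed

lemma L1:
  fixes a t k :: real and m :: nat
  assumes "m \<ge> 1" "a \<ge> 0" "t \<ge> 0" "k \<le> a" "k - t/m \<ge> 0"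
  shows "(a+t) * (k - t/m)^m \<le> a * k^m"
proof (cases "k = 0")
  case True
  then have "t = 0" using assms by (simp add: field_simps)
  then show ?thesis using True by simp
next
  case False
  have mp: "real m > 0" using assms by simp
  have "t/m \<ge> 0" using assms by simp
  then have kp: "k > 0" using assms False by linarith
  define s where "s = t / (m*k)"
  have s0: "s \<ge> 0" using assms kp by (simp add: s_def)
  have s1: "s \<le> 1" using assms kp mp by (simp add: s_def field_simps)
  have ks: "k - t/m = k * (1 - s)" using kp mp by (simp add: s_def field_simps)
  have "(1-s)^m * (1 + m * s) \<le> (1-s)^m * (1+s)^m"
    using Bernoulli_inequality[of s m] s0 s1 by (intro mult_left_mono) auto
  also have "\<dots> = (1 - s^2)^m" by (simp add: power_mult_distrib[symmetric] power2_eq_square algebra_simps)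
  also have "\<dots> \<le> 1" using s0 s1 by (intro power_le_one) (auto simp: power_le_one)
  finally have B: "(1-s)^m * (1 + m * s) \<le> 1" .
  have "a + t = a + m * k * s" using kp mp by (simp add: s_def)
  also have "\<dots> \<le> a * (1 + m * s)" using assms s0 mp by (simp add: algebra_simps mult_right_mono)
  finally have at: "a + t \<le> a * (1 + m * s)" .
  have "(a+t) * (k - t/m)^m = k^m * ((a+t) * (1-s)^m)" by (simp add: ks power_mult_distrib)
  also have "(a+t) * (1-s)^m \<le> a * (1 + m * s) * (1-s)^m"
    using at s1 by (intro mult_right_mono) auto
  also have "\<dots> \<le> a" using B assms(2) by (metis mult.commute mult.left_commute mult_left_le)
  finally show ?thesis using kp by (simp add: mult.commute mult_left_mono)
qed

lemma sqrt_powr: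
  fixes b :: real assumes "b \<ge> 0" "N \<ge> 1"
  shows "b powr (real N / 2) = sqrt (b ^ N)"
proof (cases "b = 0")
  case True then show ?thesis using assms by simp
next
  case False
  then have "b > 0" using assms by simp
  then have "sqrt (b^N) = (b powr real N) powr (1/2)" by (simp add: powr_half_sqrt powr_realpow)
  also have "\<dots> = b powr (real N / 2)" by (simp add: powr_powr)
  finally show ?thesis by simp
qed


lemma row_norm_sq: "(norm (x :: real^'n))\<^sup>2 = (\<Sum>j\<in>UNIV. (x$j)\<^sup>2)"
  unfolding dot_square_norm[symmetric] inner_vec_def by (simp add: power2_eq_square)

theorem mainTheorem5:
  fixes M :: "real^'n^'n"
  assumes "CARD('n) \<ge> 2"
  defines "n \<equiv> real CARD('n)"
  defines "\<alpha> \<equiv> msum M / n"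
  defines "\<beta> \<equiv> msq M / n"
  defines "\<kappa> \<equiv> (n * \<beta> - \<alpha>^2) / (n - 1)"
  shows "(\<alpha>^2 < \<beta> \<longrightarrow> \<bar>det M\<bar> \<le> \<beta> powr (n / 2))
       \<and> (\<alpha>^2 = \<beta> \<longrightarrow> \<bar>det M\<bar> \<le> \<bar>\<alpha>\<bar> * \<kappa> powr ((n - 1) / 2)
                         \<and> \<bar>\<alpha>\<bar> * \<kappa> powr ((n - 1) / 2) = \<beta> powr (n / 2))
       \<and> (\<alpha>^2 > \<beta> \<longrightarrow> \<bar>det M\<bar> \<le> \<bar>\<alpha>\<bar> * \<kappa> powr ((n - 1) / 2)
                         \<and> \<bar>\<alpha>\<bar> * \<kappa> powr ((n - 1) / 2) < \<beta> powr (n / 2))"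
proof -
  define N where "N = CARD('n)"
  define m where "m = N - 1"
  define q where "q = msq M"
  have N2: "N \<ge> 2" using assms(1) by (simp add: N_def)
  have m1: "m \<ge> 1" and Nm: "N = m + 1" using N2 by (auto simp: m_def)
  have nN: "n = real N" by (simp add: n_def N_def)
  have n1: "n - 1 = real m" using Nm nN by simp
  have npos: "n > 0" using N2 nN by simp
  have qrows: "q = (\<Sum>i\<in>UNIV. (norm (M$i))\<^sup>2)"
    by (simp add: q_def msq_def row_norm_sq)
  have q0: "q \<ge> 0" unfolding qrows by (simp add: sum_nonneg)
  have bq: "n * \<beta> = q" using npos by (simp add: \<beta>_def q_def)
  have b0: "\<beta> \<ge> 0" using q0 npos by (simp add: \<beta>_def q_def)
  have kq: "\<kappa> = (q - \<alpha>^2) / real m" by (simp add: \<kappa>_def bq n1)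
  have P1: "(det M)\<^sup>2 \<le> \<beta> ^ N"
  proof -
    have "\<bar>det M\<bar> \<le> (\<Prod>i\<in>UNIV. norm (M$i))" by (rule hadamard)
    then have "(det M)\<^sup>2 \<le> (\<Prod>i\<in>UNIV. norm (M$i))\<^sup>2"
      by (metis abs_ge_zero power2_abs power_mono)
    also have "\<dots> = (\<Prod>i\<in>UNIV. (norm (M$i))\<^sup>2)" by (simp add: prod_power_distrib)
    also have "\<dots> \<le> ((\<Sum>i\<in>UNIV. (norm (M$i))\<^sup>2) / card (UNIV::'n set)) ^ card (UNIV::'n set)"
      by (rule amgm) auto
    also have "\<dots> = \<beta> ^ N" by (simp add: qrows[symmetric] \<beta>_def q_def n_def N_def)
    finally show ?thesis .
  qed
  have S1: "\<bar>det M\<bar> \<le> \<beta> powr (n / 2)"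
  proof -
    have "\<bar>det M\<bar> \<le> sqrt (\<beta> ^ N)" using P1 by (simp add: real_le_rsqrt)
    then show ?thesis using sqrt_powr[OF b0, of N] N2 nN by simp
  qed
  have P2: "(det M)\<^sup>2 \<le> \<alpha>^2 * \<kappa> ^ m \<and> \<kappa> \<ge> 0" if ab: "\<alpha>^2 \<ge> \<beta>"
  proof -
    obtain k :: 'n where True by simp
    define c where "c = 1 / sqrt (real N)"
    define e :: "real^'n" where "e = (\<chi> i. c)"
    have cc: "c * c = 1 / real N" using N2 by (simp add: c_def)
    have ne: "norm e = 1"
    proof -
      have "(norm e)\<^sup>2 = (\<Sum>i\<in>(UNIV::'n set). c * c)" by (subst row_norm_sq) (simp add: e_def power2_eq_square)
      also have "\<dots> = 1" using N2 by (simp add: cc N_def)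
      finally have "norm e = 1 \<or> norm e = - 1" by (simp only: power2_eq_1_iff)
      then show ?thesis using norm_ge_zero[of e] by linarith
    qed
    obtain Q where oQ: "orthogonal_matrix Q" and Qe: "Q *v axis k 1 = e"
      using orthogonal_matrix_exists_basis[OF ne] by blast
    define P where "P = M ** Q"
    have dQ: "\<bar>det Q\<bar> = 1" using det_orthogonal_matrix[OF oQ] by auto
    have dP: "\<bar>det P\<bar> = \<bar>det M\<bar>" by (simp add: P_def det_mul abs_mult dQ)
    define C where "C j = norm (column j P)" for j
    have H: "\<bar>det P\<bar> \<le> (\<Prod>j\<in>UNIV. C j)"
    proof -
      have "transpose P $ j = column j P" for j
        by (simp add: vec_eq_iff transpose_def column_def)
      then show ?thesis using hadamard[of "transpose P"] by (simp add: C_def)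
    qed
    have Prow: "P $ i = M $ i v* Q" for i
      by (simp add: vec_eq_iff P_def matrix_matrix_mult_def vector_matrix_mult_def mult.commute)
    have Pnorm: "norm (P $ i) = norm (M $ i)" for i
    proof -
      have "(norm (P$i))\<^sup>2 = (M$i v* Q) \<bullet> (M$i v* Q)" by (simp add: Prow dot_square_norm)
      also have "\<dots> = M$i \<bullet> (Q *v (M$i v* Q))" by (rule dot_lmul_matrix)
      also have "Q *v (M$i v* Q) = M$i"
      proof -
        have t: "transpose Q *v M$i = M$i v* Q" by (rule transpose_matrix_vector)
        have "Q *v (transpose Q *v M$i) = M$i"
          using oQ by (metis matrix_vector_mul_assoc matrix_vector_mul_lid orthogonal_matrix_def)
        then show ?thesis by (simp only: t)
      qed
      finally have "(norm (P$i))\<^sup>2 = (norm (M$i))\<^sup>2" by (simp add: dot_square_norm)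
      then show ?thesis by simp
    qed
    have sumC: "(\<Sum>j\<in>UNIV. (C j)\<^sup>2) = q"
    proof -
      have "(\<Sum>j\<in>UNIV. (C j)\<^sup>2) = (\<Sum>j\<in>UNIV. \<Sum>i\<in>UNIV. (P$i$j)\<^sup>2)"
        by (simp add: C_def row_norm_sq column_def)
      also have "\<dots> = (\<Sum>i\<in>UNIV. \<Sum>j\<in>UNIV. (P$i$j)\<^sup>2)" by (rule sum.swap)
      also have "\<dots> = (\<Sum>i\<in>UNIV. (norm (P$i))\<^sup>2)" by (simp add: row_norm_sq)
      also have "\<dots> = q" by (simp add: Pnorm qrows)
      finally show ?thesis .
    qed
    have colk: "column k P = M *v e"
      by (simp add: matrix_vector_mult_basis[symmetric] P_def matrix_vector_mul_assoc[symmetric] Qe)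
    have ea: "e \<bullet> (M *v e) = \<alpha>"
    proof -
      have "e \<bullet> (M *v e) = (\<Sum>i\<in>UNIV. c * (\<Sum>j\<in>UNIV. M$i$j * c))"
        by (simp add: inner_vec_def e_def matrix_vector_mult_def)
      also have "\<dots> = c * c * msum M"
        by (simp add: msum_def sum_distrib_left mult_ac)
      finally show ?thesis by (simp add: cc \<alpha>_def nN)
    qed
    have aC: "\<alpha>^2 \<le> (C k)\<^sup>2"
    proof -
      have "\<bar>\<alpha>\<bar> \<le> norm e * norm (M *v e)" unfolding ea[symmetric] by (rule Cauchy_Schwarz_ineq2)
      then have "\<bar>\<alpha>\<bar> \<le> C k" by (simp add: ne C_def colk)
      then show ?thesis by (metis abs_ge_zero power2_abs power_mono)
    qed
    have fin: "finite (UNIV - {k})" by simp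
    have cardk: "card (UNIV - {k}) = m" by (simp add: card_Diff_singleton N_def m_def)
    have nek: "UNIV - {k} \<noteq> {}"
    proof
      assume "UNIV - {k} = {}"
      then have "card (UNIV - {k}) = 0" by (simp only: card.empty)
      then show False using cardk m1 by simp
    qed
    have sumrest: "(\<Sum>j\<in>UNIV - {k}. (C j)\<^sup>2) = q - (C k)\<^sup>2"
      using sum.remove[of UNIV k "\<lambda>j. (C j)\<^sup>2"] sumC by simp
    have Ckq: "(C k)\<^sup>2 \<le> q" using sumrest by (metis diff_ge_0_iff_ge sum_nonneg zero_le_power2)
    have "(det M)\<^sup>2 \<le> (\<Prod>j\<in>UNIV. C j)\<^sup>2"
      using H dP by (metis abs_ge_zero power2_abs power_mono)
    also have "\<dots> = (C k)\<^sup>2 * (\<Prod>j\<in>UNIV - {k}. (C j)\<^sup>2)"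
      by (simp add: prod.remove[of UNIV k] power_mult_distrib prod_power_distrib[symmetric])
    also have "\<dots> \<le> (C k)\<^sup>2 * (((q - (C k)\<^sup>2)) / m) ^ m"
      using amgm[OF fin nek, of "\<lambda>j. (C j)\<^sup>2"] by (intro mult_left_mono) (auto simp: sumrest cardk)
    also have "\<dots> \<le> \<alpha>^2 * \<kappa> ^ m"
    proof -
      have "(\<alpha>^2 + ((C k)\<^sup>2 - \<alpha>^2)) * (\<kappa> - ((C k)\<^sup>2 - \<alpha>^2) / m) ^ m \<le> \<alpha>^2 * \<kappa> ^ m"
      proof (rule L1)
        show "\<kappa> \<le> \<alpha>^2"
        proof -
          have "q \<le> n * \<alpha>^2" using ab bq npos by (metis mult_left_mono less_imp_le)
          then have "q - \<alpha>^2 \<le> real m * \<alpha>^2" using n1 by (simp add: algebra_simps)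
          then show ?thesis using m1 by (simp add: kq divide_le_eq mult.commute)
        qed
        have "\<kappa> - ((C k)\<^sup>2 - \<alpha>^2) / m = (q - (C k)\<^sup>2) / m" using m1 by (simp add: kq diff_divide_distrib)
        then show "\<kappa> - ((C k)\<^sup>2 - \<alpha>^2) / m \<ge> 0" using Ckq by simp
      qed (use m1 aC in auto)
      moreover have "\<kappa> - ((C k)\<^sup>2 - \<alpha>^2) / m = (q - (C k)\<^sup>2) / m" using m1 by (simp add: kq diff_divide_distrib)
      ultimately show ?thesis by simp
    qed
    finally have "(det M)\<^sup>2 \<le> \<alpha>^2 * \<kappa> ^ m" .
    moreover have "\<kappa> \<ge> 0" using aC Ckq m1 by (simp add: kq)
    ultimately show ?thesis by simp
  qed
  have kpow: "\<kappa> powr ((n - 1) / 2) = sqrt (\<kappa> ^ m)" if "\<kappa> \<ge> 0"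
    using sqrt_powr[OF that m1] n1 by simp
  have S2: "\<bar>det M\<bar> \<le> \<bar>\<alpha>\<bar> * \<kappa> powr ((n - 1) / 2) \<and> \<kappa> \<ge> 0
     \<and> \<bar>\<alpha>\<bar> * \<kappa> powr ((n - 1) / 2) = sqrt (\<alpha>^2 * \<kappa>^m)" if ab: "\<alpha>^2 \<ge> \<beta>"
  proof -
    from P2[OF ab] have d: "(det M)\<^sup>2 \<le> \<alpha>^2 * \<kappa> ^ m" and k0: "\<kappa> \<ge> 0" by auto
    have eq: "\<bar>\<alpha>\<bar> * \<kappa> powr ((n - 1) / 2) = sqrt (\<alpha>^2 * \<kappa>^m)"
      by (simp add: kpow[OF k0] real_sqrt_mult)
    have "\<bar>det M\<bar> \<le> sqrt (\<alpha>^2 * \<kappa>^m)" using d by (simp add: real_le_rsqrt)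
    then show ?thesis using eq k0 by simp
  qed
  have bpow: "\<beta> powr (n / 2) = sqrt (\<beta> ^ N)" using sqrt_powr[OF b0, of N] N2 nN by simp
  show ?thesis
  proof (intro conjI impI)
    assume "\<alpha>^2 < \<beta>" then show "\<bar>det M\<bar> \<le> \<beta> powr (n / 2)" using S1 by simp
  next
    assume h: "\<alpha>^2 = \<beta>"
    then show "\<bar>det M\<bar> \<le> \<bar>\<alpha>\<bar> * \<kappa> powr ((n - 1) / 2)" using S2 by simp
    have "\<kappa> = \<beta>" using h npos n1 m1 by (simp add: \<kappa>_def field_simps)
    then have "\<alpha>^2 * \<kappa>^m = \<beta>^N" using h Nm by simp
    then show "\<bar>\<alpha>\<bar> * \<kappa> powr ((n - 1) / 2) = \<beta> powr (n / 2)" using S2 h bpow by simp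
  next
    assume h: "\<alpha>^2 > \<beta>"
    then show "\<bar>det M\<bar> \<le> \<bar>\<alpha>\<bar> * \<kappa> powr ((n - 1) / 2)" using S2 by simp
    from h S2 have k0: "\<kappa> \<ge> 0" and eq: "\<bar>\<alpha>\<bar> * \<kappa> powr ((n - 1) / 2) = sqrt (\<alpha>^2 * \<kappa>^m)" by auto
    have ne: "\<alpha>^2 \<noteq> \<kappa>"
    proof
      assume "\<alpha>^2 = \<kappa>"
      then have "\<alpha>^2 = (q - \<alpha>^2) / real m" by (simp add: kq)
      moreover have "real m > 0" using m1 by simp
      ultimately have "\<alpha>^2 * real m = q - \<alpha>^2" by (simp add: field_simps)
      then have "q = n * \<alpha>^2" using n1 by (simp add: algebra_simps)
      then show False using h bq npos by simp
    qed
    have bm: "\<beta> = (\<alpha>^2 + real m * \<kappa>) / real (m+1)"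
      using m1 npos bq n1 nN Nm by (simp add: kq field_simps)
    have "\<alpha>^2 * \<kappa>^m < \<beta> ^ N"
      using L2[of "\<alpha>^2" \<kappa> m] ne k0 m1 by (simp add: bm Nm)
    then show "\<bar>\<alpha>\<bar> * \<kappa> powr ((n - 1) / 2) < \<beta> powr (n / 2)"
      using eq bpow by simp
  qed
qed

end
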